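(* Let $(X,d,A)$ be a metric pair where $A$ is not isolated, and let $p\in[1,\infty]$. Then no element of $(\overline{D}_p(X,A),W_p)$ has a compact neighborhood. Hence $(\overline{D}_p(X,A),W_p)$ is not locally compact, and every compact subset of it has empty interior.
   Context: A metric on $X$ is a map $d:X\times X\to[0,\infty]$ with $d(x,x)=0$, symmetry and the triangle inequality (infinite distances allowed, $d(x,y)=0$ need not imply $x=y$); a metric pair $(X,d,A)$ is such a space with a closed subset $A$. Write $d(x,A)=\inf_{a\in A}d(x,a)$ and $A^\delta=\{x:d(x,A)<\delta\}$ for $\delta\in(0,\infty]$. $A$ is isolated if there is $\delta>0$ with $A^\delta=A$. $\overline{D}(X,A)$ is the set of countable formal sums $\hat\alpha=\sum_{i\in I}x_i$ of points of $X\setminus A$ (repetitions allowed); $0$ the empty sum. A matching of $\hat\alpha=\sum_{i\in I}x_i$, $\hat\beta=\sum_{j\in J}y_j$ is a formal sum $\sum_{k\in K}(x_k,y_{\varphi(k)})+\sum_{i\in I\setminus K}(x_i,z_i)+\sum_{j\in J\setminus\varphi(K)}(w_j,y_j)$ with $K\subset I$, $\varphi$ injective, $z_i,w_j\in A$; its $p$-cost is the $\ell^p$ norm (sup norm if $p=\infty$) of the distances of paired points; $W_p$ is the infimum of $p$-costs. $u_\delta(\alpha)$, $\ell_\delta(\alpha)$ are the restrictions of $\hat\alpha$ to $X\setminus A^\delta$ and to $A^\delta\setminus A$. For $p<\infty$, $\overline{D}_p(X,A)=\{\alpha: |u_\infty(\alpha)|<\infty,\ W_p(\ell_\infty(\alpha),0)<\infty\}$;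 $\overline{D}_\infty(X,A)=\{\alpha:|u_\delta(\alpha)|<\infty\ \forall\delta>0\}$. *)

theory Defs
  imports "HOL-Analysis.Analysis"
begin

text \<open>The ambient space X is the universe of the type 'a. Distances take values
 in [0,\<infinity>] (ennreal); d x y = 0 need not imply x = y.\<close>

definition emetric :: "('a \<Rightarrow> 'a \<Rightarrow> ennreal) \<Rightarrow> bool" where
  "emetric d \<longleftrightarrow> (\<forall>x. d x x = 0) \<and> (\<forall>x y. d x y = d y x)
      \<and> (\<forall>x y z. d x z \<le> d x y + d y z)"

definition setdist_pt :: "('a \<Rightarrow> 'a \<Rightarrow> ennreal) \<Rightarrow> 'a \<Rightarrow> 'a set \<Rightarrow> ennreal" where
  "setdist_pt d x A = (INF a\<in>A. d x a)"

definition eclosed :: "('a \<Rightarrow> 'a \<Rightarrow> ennreal) \<Rightarrow> 'a set \<Rightarrow> bool" where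
  "eclosed d A \<longleftrightarrow> (\<forall>x. setdist_pt d x A = 0 \<longrightarrow> x \<in> A)"

definition metric_pair :: "('a \<Rightarrow> 'a \<Rightarrow> ennreal) \<Rightarrow> 'a set \<Rightarrow> bool" where
  "metric_pair d A \<longleftrightarrow> emetric d \<and> eclosed d A"

definition thick :: "('a \<Rightarrow> 'a \<Rightarrow> ennreal) \<Rightarrow> 'a set \<Rightarrow> ennreal \<Rightarrow> 'a set" where
  "thick d A \<delta> = {x. setdist_pt d x A < \<delta>}"

definition isolated_set :: "('a \<Rightarrow> 'a \<Rightarrow> ennreal) \<Rightarrow> 'a set \<Rightarrow> bool" where
  "isolated_set d A \<longleftrightarrow> (\<exists>\<delta>>0. thick d A \<delta> = A)"

text \<open>A countable formal sum \<Sum>_{i\<in>I} x_i is represented by a countable index set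
 I \<subseteq> nat together with the family x (values outside I are irrelevant).\<close>
type_synonym 'a diagram = "nat set \<times> (nat \<Rightarrow> 'a)"

definition Dbar :: "'a set \<Rightarrow> 'a diagram set" where
  "Dbar A = {(I, x). \<forall>i\<in>I. x i \<notin> A}"

definition zero_diag :: "'a diagram" where
  "zero_diag = ({}, (\<lambda>_. undefined))"

definition restr :: "'a set \<Rightarrow> 'a diagram \<Rightarrow> 'a diagram" where
  "restr S \<alpha> = (fst \<alpha> \<inter> {i. snd \<alpha> i \<in> S}, snd \<alpha>)"

definition u_part :: "('a \<Rightarrow> 'a \<Rightarrow> ennreal) \<Rightarrow> 'a set \<Rightarrow> ennreal \<Rightarrow> 'a diagram \<Rightarrow> 'a diagram" where
  "u_part d A \<delta> \<alpha> = restr (- thick d A \<delta>) \<alpha>"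

definition l_part :: "('a \<Rightarrow> 'a \<Rightarrow> ennreal) \<Rightarrow> 'a set \<Rightarrow> ennreal \<Rightarrow> 'a diagram \<Rightarrow> 'a diagram" where
  "l_part d A \<delta> \<alpha> = restr (thick d A \<delta> - A) \<alpha>"

definition is_matching ::
  "'a set \<Rightarrow> 'a diagram \<Rightarrow> 'a diagram \<Rightarrow> nat set \<Rightarrow> (nat \<Rightarrow> nat) \<Rightarrow> (nat \<Rightarrow> 'a) \<Rightarrow> (nat \<Rightarrow> 'a) \<Rightarrow> bool"
  where
  "is_matching A \<alpha> \<beta> K \<phi> z w \<longleftrightarrow>
     K \<subseteq> fst \<alpha> \<and> inj_on \<phi> K \<and> \<phi> ` K \<subseteq> fst \<beta>
     \<and> (\<forall>i\<in>fst \<alpha> - K. z i \<in> A) \<and> (\<forall>j\<in>fst \<beta> - \<phi> ` K. w j \<in> A)"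

definition epow :: "ennreal \<Rightarrow> real \<Rightarrow> ennreal" where
  "epow s r = (if s = \<infinity> then \<infinity> else ennreal (enn2real s powr r))"

definition match_cost ::
  "('a \<Rightarrow> 'a \<Rightarrow> ennreal) \<Rightarrow> ennreal \<Rightarrow> 'a diagram \<Rightarrow> 'a diagram \<Rightarrow> nat set \<Rightarrow> (nat \<Rightarrow> nat)
     \<Rightarrow> (nat \<Rightarrow> 'a) \<Rightarrow> (nat \<Rightarrow> 'a) \<Rightarrow> ennreal" where
  "match_cost d p \<alpha> \<beta> K \<phi> z w =
     (let x = snd \<alpha>; y = snd \<beta>; I = fst \<alpha>; J = fst \<beta> in
      if p = \<infinity> then
        sup (SUP k\<in>K. d (x k) (y (\<phi> k)))
          (sup (SUP i\<in>I - K. d (x i) (z i)) (SUP j\<in>J - \<phi> ` K. d (w j) (y j)))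
      else
        (let q = enn2real p in
         epow ((\<Sum>\<^sub>\<infinity>k\<in>K. epow (d (x k) (y (\<phi> k))) q)
             + (\<Sum>\<^sub>\<infinity>i\<in>I - K. epow (d (x i) (z i)) q)
             + (\<Sum>\<^sub>\<infinity>j\<in>J - \<phi> ` K. epow (d (w j) (y j)) q)) (1 / q)))"

definition Wp :: "('a \<Rightarrow> 'a \<Rightarrow> ennreal) \<Rightarrow> 'a set \<Rightarrow> ennreal \<Rightarrow> 'a diagram \<Rightarrow> 'a diagram \<Rightarrow> ennreal" where
  "Wp d A p \<alpha> \<beta> =
     (INF (K, \<phi>, z, w) \<in> {(K, \<phi>, z, w). is_matching A \<alpha> \<beta> K \<phi> z w}.
        match_cost d p \<alpha> \<beta> K \<phi> z w)"

definition Dp :: "('a \<Rightarrow> 'a \<Rightarrow> ennreal) \<Rightarrow> 'a set \<Rightarrow> ennreal \<Rightarrow> 'a diagram set" where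
  "Dp d A p =
     (if p = \<infinity> then {\<alpha> \<in> Dbar A. \<forall>\<delta>>0. finite (fst (u_part d A \<delta> \<alpha>))}
      else {\<alpha> \<in> Dbar A. finite (fst (u_part d A \<infinity> \<alpha>))
                       \<and> Wp d A p (l_part d A \<infinity> \<alpha>) zero_diag < \<infinity>})"

definition Wp_topology :: "('a \<Rightarrow> 'a \<Rightarrow> ennreal) \<Rightarrow> 'a set \<Rightarrow> ennreal \<Rightarrow> 'a diagram topology" where
  "Wp_topology d A p = topology (\<lambda>U. U \<subseteq> Dp d A p \<and>
      (\<forall>\<alpha>\<in>U. \<exists>\<epsilon>>0. \<forall>\<beta>\<in>Dp d A p. Wp d A p \<alpha> \<beta> < \<epsilon> \<longrightarrow> \<beta> \<in> U))"

end

theory Submission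
  imports Defs
begin

definition WpP where
 "WpP d A p = (\<lambda>U. U \<subseteq> Dp d A p \<and>
      (\<forall>\<alpha>\<in>U. \<exists>\<epsilon>>0. \<forall>\<beta>\<in>Dp d A p. Wp d A p \<alpha> \<beta> < \<epsilon> \<longrightarrow> \<beta> \<in> U))"

lemma istop_WpP: "istopology (WpP d A p)"
  unfolding istopology_def WpP_def
proof (intro conjI; intro allI impI)
  fix S T assume S: "S \<subseteq> Dp d A p \<and> (\<forall>\<alpha>\<in>S. \<exists>\<epsilon>>0. \<forall>\<beta>\<in>Dp d A p. Wp d A p \<alpha> \<beta> < \<epsilon> \<longrightarrow> \<beta> \<in> S)"
    and T: "T \<subseteq> Dp d A p \<and> (\<forall>\<alpha>\<in>T. \<exists>\<epsilon>>0. \<forall>\<beta>\<in>Dp d A p. Wp d A p \<alpha> \<beta> < \<epsilon> \<longrightarrow> \<beta> \<in> T)"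
  show "S \<inter> T \<subseteq> Dp d A p \<and> (\<forall>\<alpha>\<in>S \<inter> T. \<exists>\<epsilon>>0. \<forall>\<beta>\<in>Dp d A p. Wp d A p \<alpha> \<beta> < \<epsilon> \<longrightarrow> \<beta> \<in> S \<inter> T)"
  proof (intro conjI ballI)
    show "S \<inter> T \<subseteq> Dp d A p" using S by blast
    fix \<alpha> assume "\<alpha> \<in> S \<inter> T"
    then obtain e1 e2 where "e1 > 0" "\<forall>\<beta>\<in>Dp d A p. Wp d A p \<alpha> \<beta> < e1 \<longrightarrow> \<beta> \<in> S"
       "e2 > 0" "\<forall>\<beta>\<in>Dp d A p. Wp d A p \<alpha> \<beta> < e2 \<longrightarrow> \<beta> \<in> T" using S T by blast
    then show "\<exists>\<epsilon>>0. \<forall>\<beta>\<in>Dp d A p. Wp d A p \<alpha> \<beta> < \<epsilon> \<longrightarrow> \<beta> \<in> S \<inter> T"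
      by (intro exI[of _ "min e1 e2"]) auto
  qed
next
  fix K assume "\<forall>S\<in>K. S \<subseteq> Dp d A p \<and> (\<forall>\<alpha>\<in>S. \<exists>\<epsilon>>0. \<forall>\<beta>\<in>Dp d A p. Wp d A p \<alpha> \<beta> < \<epsilon> \<longrightarrow> \<beta> \<in> S)"
  then show "\<Union>K \<subseteq> Dp d A p \<and> (\<forall>\<alpha>\<in>\<Union>K. \<exists>\<epsilon>>0. \<forall>\<beta>\<in>Dp d A p. Wp d A p \<alpha> \<beta> < \<epsilon> \<longrightarrow> \<beta> \<in> \<Union>K)"
    by (metis (no_types, lifting) UnionE UnionI Union_least)
qed

lemma openin_Wp: "openin (Wp_topology d A p) U \<longleftrightarrow> WpP d A p U"
  using istop_WpP[of d A p] unfolding Wp_topology_def WpP_def[symmetric] by simp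

lemma topspace_Wp: "topspace (Wp_topology d A p) = Dp d A p"
proof -
  have "WpP d A p (Dp d A p)" unfolding WpP_def by (auto intro: exI[of _ 1])
  then show ?thesis unfolding topspace_def openin_Wp WpP_def by blast
qed

lemma compact_chain:
  assumes "compactin X K" "\<And>n. openin X (V n)" "\<And>m n. m \<le> (n::nat) \<Longrightarrow> V m \<subseteq> V n"
    "K \<subseteq> (\<Union>n. V n)"
  shows "\<exists>n. K \<subseteq> V n"
proof -
  obtain F where F: "finite F" "F \<subseteq> range V" "K \<subseteq> \<Union>F"
    using assms(1,2,4) unfolding compactin_def by (metis imageE)
  then obtain T where T: "finite T" "F = V ` T" by (meson finite_subset_image)
  have "K \<subseteq> V (Max (insert 0 T))"
  proof
    fix x assume "x \<in> K"
    then obtain t where "t \<in> T" "x \<in> V t" using F T by blast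
    then show "x \<in> V (Max (insert 0 T))" using assms(3)[of t "Max (insert 0 T)"] T by auto
  qed
  then show ?thesis by blast
qed

lemma summable_enn[simp]: "(f::_ \<Rightarrow> ennreal) summable_on S"
  by (rule nonneg_summable_on_complete) simp

lemma sd_le: "a \<in> A \<Longrightarrow> setdist_pt d x A \<le> d x a"
  unfolding setdist_pt_def by (rule INF_lower)

lemma sd_tri:
  assumes "emetric d"
  shows "setdist_pt d x A \<le> d x y + setdist_pt d y A"
proof (cases "d x y = top")
  case True then show ?thesis by simp
next
  case False
  have "setdist_pt d x A - d x y \<le> d y a" if "a \<in> A" for a
  proof -
    have "setdist_pt d x A \<le> d x y + d y a"
      using sd_le[OF that, of d x] assms unfolding emetric_def by (meson order_trans)
    then show ?thesis using False by (simp add: ennreal_minus_le_iff)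
  qed
  then have "setdist_pt d x A - d x y \<le> setdist_pt d y A"
    unfolding setdist_pt_def[of d y] by (meson INF_greatest)
  then show ?thesis using False by (simp add: ennreal_minus_le_iff)
qed

lemma epow_ennreal: "x \<ge> 0 \<Longrightarrow> epow (ennreal x) r = ennreal (x powr r)"
  unfolding epow_def by simp

lemma epow_mono:
  assumes "s \<le> t" "r > 0"
  shows "epow s r \<le> epow t r"
proof (cases "t = \<infinity>")
  case True then show ?thesis unfolding epow_def by simp
next
  case False
  then have "s \<noteq> \<infinity>" using assms by (metis infinity_ennreal_def top.extremum_unique)
  then show ?thesis using False assms unfolding epow_def
    by (auto intro!: ennreal_leI powr_mono2 enn2real_mono simp: less_top)
qed

lemma epow_ge:
  assumes "ennreal \<tau> \<le> s" "\<tau> \<ge> 0" "q > 0"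
  shows "ennreal (\<tau> powr q) \<le> epow s q"
  using epow_mono[OF assms(1) assms(3)] epow_ennreal[OF assms(2)] by simp

lemma epow_inv_less:
  assumes "epow S (1/q) < ennreal \<rho>" "q > 0" "\<rho> > 0"
  shows "S < ennreal (\<rho> powr q)"
proof -
  have "S \<noteq> \<infinity>" using assms(1) unfolding epow_def by auto
  then obtain s where s: "S = ennreal s" "s \<ge> 0" by (cases S) auto
  then have "s powr (1/q) < \<rho>" using assms(1) epow_ennreal[OF s(2)]
    by (simp add: ennreal_less_iff assms)
  then have "(s powr (1/q)) powr q < \<rho> powr q"
    using assms by (simp add: powr_less_mono2)
  then have "s < \<rho> powr q" using s assms by (simp add: powr_powr)
  then show ?thesis using s assms by (simp add: ennreal_lessI)
qed

lemma Ebound: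
  fixes f :: "'b \<Rightarrow> ennreal"
  assumes "B \<subseteq> I" "\<And>i. i \<in> B \<Longrightarrow> b \<le> f i" "b > 0" "infsum f I < \<infinity>"
  shows "finite B \<and> of_nat (card B) * b \<le> infsum f I"
proof -
  have le: "infsum f B \<le> infsum f I"
    using assms(1) by (intro infsum_mono_neutral) auto
  have fin: "finite B"
  proof (rule ccontr)
    assume "infinite B"
    then have "infsum f B = \<infinity>" using assms by (intro infsum_superconst_infinite_ennreal) auto
    then show False using le assms(4) by simp
  qed
  have "of_nat (card B) * b \<le> sum f B" using assms(2) by (metis sum_bounded_below)
  also have "\<dots> = infsum f B" using fin by simp
  finally show ?thesis using fin le by simp
qed

lemma Wp_lessE:
  assumes "Wp d A p \<zeta> \<zeta>' < e"
  shows "\<exists>K \<phi> z w. is_matching A \<zeta> \<zeta>' K \<phi> z w \<and> match_cost d p \<zeta> \<zeta>' K \<phi> z w < e"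
  using assms unfolding Wp_def INF_less_iff by auto

lemma Wp_le:
  assumes "is_matching A \<zeta> \<zeta>' K \<phi> z w"
  shows "Wp d A p \<zeta> \<zeta>' \<le> match_cost d p \<zeta> \<zeta>' K \<phi> z w"
  unfolding Wp_def by (rule INF_lower2[of "(K,\<phi>,z,w)"]) (use assms in auto)

lemma GC:
  assumes em: "emetric d" and m: "is_matching A \<zeta> \<zeta>' K \<phi> z w"
    and "\<tau> > 0" "a' \<ge> 0" "\<tau> + a' \<le> c"
  shows "{j\<in>fst \<zeta>'. ennreal c < setdist_pt d (snd \<zeta>' j) A + ennreal a'} \<subseteq>
     \<phi> ` {k\<in>K. ennreal c < setdist_pt d (snd \<zeta> k) A + ennreal (a'+\<tau>)}
     \<union> \<phi> ` {k\<in>K. ennreal \<tau> \<le> d (snd \<zeta> k) (snd \<zeta>' (\<phi> k))}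
     \<union> {j\<in>fst \<zeta>' - \<phi>`K. ennreal \<tau> \<le> d (w j) (snd \<zeta>' j)}"
proof
  fix j assume j: "j \<in> {j\<in>fst \<zeta>'. ennreal c < setdist_pt d (snd \<zeta>' j) A + ennreal a'}"
  show "j \<in> \<phi> ` {k\<in>K. ennreal c < setdist_pt d (snd \<zeta> k) A + ennreal (a'+\<tau>)}
     \<union> \<phi> ` {k\<in>K. ennreal \<tau> \<le> d (snd \<zeta> k) (snd \<zeta>' (\<phi> k))}
     \<union> {j\<in>fst \<zeta>' - \<phi>`K. ennreal \<tau> \<le> d (w j) (snd \<zeta>' j)}"
  proof (cases "j \<in> \<phi> ` K")
    case True
    then obtain k where k: "k \<in> K" "j = \<phi> k" by blast
    show ?thesis
    proof (cases "ennreal \<tau> \<le> d (snd \<zeta> k) (snd \<zeta>' (\<phi> k))")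
      case True then show ?thesis using k by blast
    next
      case False
      then have D: "d (snd \<zeta> k) (snd \<zeta>' j) \<le> ennreal \<tau>" using k by simp
      have "setdist_pt d (snd \<zeta>' j) A \<le> d (snd \<zeta>' j) (snd \<zeta> k) + setdist_pt d (snd \<zeta> k) A"
        by (rule sd_tri[OF em])
      also have "\<dots> = d (snd \<zeta> k) (snd \<zeta>' j) + setdist_pt d (snd \<zeta> k) A"
        using em unfolding emetric_def by metis
      also have "\<dots> \<le> ennreal \<tau> + setdist_pt d (snd \<zeta> k) A" using D by (rule add_right_mono)
      finally have "setdist_pt d (snd \<zeta>' j) A + ennreal a' \<le> (ennreal \<tau> + setdist_pt d (snd \<zeta> k) A) + ennreal a'"
        by (rule add_right_mono)
      also have "\<dots> = setdist_pt d (snd \<zeta> k) A + ennreal (a'+\<tau>)"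
        using assms by (simp add: ennreal_plus ac_simps)
      finally have "setdist_pt d (snd \<zeta>' j) A + ennreal a' \<le> setdist_pt d (snd \<zeta> k) A + ennreal (a'+\<tau>)" .
      then have "ennreal c < setdist_pt d (snd \<zeta> k) A + ennreal (a'+\<tau>)" using j by (auto intro: order_less_le_trans)
      then show ?thesis using k by blast
    qed
  next
    case False
    then have jJ: "j \<in> fst \<zeta>' - \<phi> ` K" using j by blast
    then have wA: "w j \<in> A" using m unfolding is_matching_def by blast
    show ?thesis
    proof (rule ccontr)
      assume "\<not> ?thesis"
      then have D: "d (w j) (snd \<zeta>' j) < ennreal \<tau>" using jJ by auto
      have "setdist_pt d (snd \<zeta>' j) A \<le> d (snd \<zeta>' j) (w j)" by (rule sd_le[OF wA])
      also have "\<dots> = d (w j) (snd \<zeta>' j)" using em unfolding emetric_def by metis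
      finally have "setdist_pt d (snd \<zeta>' j) A < ennreal \<tau>" using D by simp
      then have "setdist_pt d (snd \<zeta>' j) A + ennreal a' < ennreal \<tau> + ennreal a'"
        by (simp add: ennreal_add_left_cancel_less)
      also have "\<dots> \<le> ennreal c" using assms by (simp add: ennreal_plus[symmetric] del: ennreal_plus)
      finally have "setdist_pt d (snd \<zeta>' j) A + ennreal a' < ennreal c" .
      moreover have "ennreal c < setdist_pt d (snd \<zeta>' j) A + ennreal a'" using j by simp
      ultimately show False by (meson less_asym)
    qed
  qed
qed

lemma cost_inf:
  assumes "p = \<infinity>" "match_cost d p \<zeta> \<zeta>' K \<phi> z w < e"
  shows "(\<forall>k\<in>K. d (snd \<zeta> k) (snd \<zeta>' (\<phi> k)) < e) \<and> (\<forall>j\<in>fst \<zeta>' - \<phi>`K. d (w j) (snd \<zeta>' j) < e)"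
proof -
  have "sup (SUP k\<in>K. d (snd \<zeta> k) (snd \<zeta>' (\<phi> k)))
          (sup (SUP i\<in>fst \<zeta> - K. d (snd \<zeta> i) (z i)) (SUP j\<in>fst \<zeta>' - \<phi> ` K. d (w j) (snd \<zeta>' j))) < e"
    using assms unfolding match_cost_def Let_def by simp
  then have "(SUP k\<in>K. d (snd \<zeta> k) (snd \<zeta>' (\<phi> k))) < e" "(SUP j\<in>fst \<zeta>' - \<phi> ` K. d (w j) (snd \<zeta>' j)) < e"
    by (meson order_le_less_trans sup_ge1 sup_ge2)+
  then show ?thesis by (auto dest: SUP_lessD)
qed

lemma cost_fin:
  assumes "p \<noteq> \<infinity>" "enn2real p > 0" "match_cost d p \<zeta> \<zeta>' K \<phi> z w < ennreal \<rho>" "\<rho> > 0" "\<tau> > 0"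
  shows "finite {k\<in>K. ennreal \<tau> \<le> d (snd \<zeta> k) (snd \<zeta>' (\<phi> k))}
    \<and> finite {j\<in>fst \<zeta>' - \<phi>`K. ennreal \<tau> \<le> d (w j) (snd \<zeta>' j)}
    \<and> real (card {k\<in>K. ennreal \<tau> \<le> d (snd \<zeta> k) (snd \<zeta>' (\<phi> k))}
       + card {j\<in>fst \<zeta>' - \<phi>`K. ennreal \<tau> \<le> d (w j) (snd \<zeta>' j)}) * \<tau> powr (enn2real p)
      \<le> \<rho> powr (enn2real p)"
proof -
  define q where "q = enn2real p"
  define S1 where "S1 = (\<Sum>\<^sub>\<infinity>k\<in>K. epow (d (snd \<zeta> k) (snd \<zeta>' (\<phi> k))) q)"
  define S2 where "S2 = (\<Sum>\<^sub>\<infinity>i\<in>fst \<zeta> - K. epow (d (snd \<zeta> i) (z i)) q)"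
  define S3 where "S3 = (\<Sum>\<^sub>\<infinity>j\<in>fst \<zeta>' - \<phi> ` K. epow (d (w j) (snd \<zeta>' j)) q)"
  define B1 where "B1 = {k\<in>K. ennreal \<tau> \<le> d (snd \<zeta> k) (snd \<zeta>' (\<phi> k))}"
  define B2 where "B2 = {j\<in>fst \<zeta>' - \<phi>`K. ennreal \<tau> \<le> d (w j) (snd \<zeta>' j)}"
  have q: "q > 0" using assms q_def by simp
  have "epow (S1 + S2 + S3) (1/q) < ennreal \<rho>"
    using assms(1,3) unfolding match_cost_def Let_def S1_def S2_def S3_def q_def by simp
  then have tot: "S1 + S2 + S3 < ennreal (\<rho> powr q)" using epow_inv_less q assms(4) by blast
  have "S1 \<le> S1 + S2 + S3" "S3 \<le> S1 + S2 + S3" by (simp_all add: add_increasing2 add_increasing)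
  moreover have "S1 + S2 + S3 < top" using tot ennreal_less_top[of "\<rho> powr q"] by order
  ultimately have fin13: "S1 < top" "S3 < top" by order+
  have b: "ennreal (\<tau> powr q) > 0" using assms(5) by simp
  have e1: "finite B1 \<and> of_nat (card B1) * ennreal (\<tau> powr q) \<le> S1"
    unfolding S1_def B1_def
    by (rule Ebound) (use fin13 b assms(5) q in \<open>auto simp: S1_def intro!: epow_ge\<close>)
  have e2: "finite B2 \<and> of_nat (card B2) * ennreal (\<tau> powr q) \<le> S3"
    unfolding S3_def B2_def
    by (rule Ebound) (use fin13 b assms(5) q in \<open>auto simp: S3_def intro!: epow_ge\<close>)
  have "of_nat (card B1) * ennreal (\<tau> powr q) + of_nat (card B2) * ennreal (\<tau> powr q) \<le> S1 + S2 + S3"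
    using e1 e2 by (metis add.commute add_increasing2 add_mono zero_le)
  then have "ennreal (real (card B1 + card B2) * \<tau> powr q) < ennreal (\<rho> powr q)"
    using tot by (simp add: ennreal_mult' ennreal_of_nat_eq_real_of_nat distrib_right)
  then have "real (card B1 + card B2) * \<tau> powr q < \<rho> powr q"
    by (simp add: ennreal_less_iff)
  then show ?thesis using e1 e2 unfolding B1_def B2_def q_def by simp
qed

lemma fst_lpart: "fst (l_part d A \<infinity> \<zeta>) = {i\<in>fst \<zeta>. setdist_pt d (snd \<zeta> i) A < \<infinity> \<and> snd \<zeta> i \<notin> A}"
  unfolding l_part_def restr_def thick_def by auto

lemma snd_lpart: "snd (l_part d A \<delta> \<zeta>) = snd \<zeta>"
  unfolding l_part_def restr_def by simp

lemma fst_upart: "fst (u_part d A \<delta> \<zeta>) = {i\<in>fst \<zeta>. \<not> setdist_pt d (snd \<zeta> i) A < \<delta>}"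
  unfolding u_part_def restr_def thick_def by auto

lemma lpart_sum:
  assumes "p \<noteq> \<infinity>" "\<zeta> \<in> Dp d A p"
  shows "\<exists>z. (\<forall>i\<in>fst (l_part d A \<infinity> \<zeta>). z i \<in> A) \<and>
     (\<Sum>\<^sub>\<infinity>i\<in>fst (l_part d A \<infinity> \<zeta>). epow (d (snd \<zeta> i) (z i)) (enn2real p)) < \<infinity>"
proof -
  have "Wp d A p (l_part d A \<infinity> \<zeta>) zero_diag < \<infinity>" using assms unfolding Dp_def by simp
  then obtain K \<phi> z w where m: "is_matching A (l_part d A \<infinity> \<zeta>) zero_diag K \<phi> z w"
    and c: "match_cost d p (l_part d A \<infinity> \<zeta>) zero_diag K \<phi> z w < \<infinity>"
    using Wp_lessE by blast
  have K: "K = {}" using m unfolding is_matching_def zero_diag_def by auto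
  have zA: "\<forall>i\<in>fst (l_part d A \<infinity> \<zeta>). z i \<in> A" using m K unfolding is_matching_def by auto
  define S where "S = (\<Sum>\<^sub>\<infinity>i\<in>fst (l_part d A \<infinity> \<zeta>). epow (d (snd \<zeta> i) (z i)) (enn2real p))"
  have "epow (0 + S + 0) (1 / enn2real p) < \<infinity>"
    using c assms(1) K unfolding match_cost_def Let_def S_def zero_diag_def snd_lpart by simp
  then have "S \<noteq> \<infinity>" unfolding epow_def by auto
  then show ?thesis using zA S_def by (auto simp: less_top)
qed

lemma q_ge1: "1 \<le> p \<Longrightarrow> p \<noteq> \<infinity> \<Longrightarrow> enn2real p \<ge> 1"
  by (metis enn2real_1 enn2real_mono infinity_ennreal_def less_top)

lemma L1:
  assumes "1 \<le> p" "\<zeta> \<in> Dp d A p" "c > 0"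
  shows "finite {i\<in>fst \<zeta>. ennreal c \<le> setdist_pt d (snd \<zeta> i) A}"
proof (cases "p = \<infinity>")
  case True
  then have "finite (fst (u_part d A (ennreal c) \<zeta>))" using assms unfolding Dp_def by auto
  then show ?thesis unfolding fst_upart by (simp add: not_less)
next
  case False
  define q where "q = enn2real p"
  have q: "q \<ge> 1" using q_ge1 assms False q_def by simp
  obtain z where zA: "\<forall>i\<in>fst (l_part d A \<infinity> \<zeta>). z i \<in> A"
    and S: "(\<Sum>\<^sub>\<infinity>i\<in>fst (l_part d A \<infinity> \<zeta>). epow (d (snd \<zeta> i) (z i)) q) < \<infinity>"
    using lpart_sum[OF False assms(2)] q_def by blast
  have dbar: "\<forall>i\<in>fst \<zeta>. snd \<zeta> i \<notin> A" using assms(2) unfolding Dp_def Dbar_def by (auto split: if_splits)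
  have fu: "finite (fst (u_part d A \<infinity> \<zeta>))" using assms False unfolding Dp_def by auto
  have fl: "finite {i\<in>fst (l_part d A \<infinity> \<zeta>). ennreal c \<le> setdist_pt d (snd \<zeta> i) A}"
  proof -
    have "finite {i\<in>fst (l_part d A \<infinity> \<zeta>). ennreal c \<le> setdist_pt d (snd \<zeta> i) A} \<and> 
      of_nat (card {i\<in>fst (l_part d A \<infinity> \<zeta>). ennreal c \<le> setdist_pt d (snd \<zeta> i) A}) * ennreal (c powr q)
      \<le> (\<Sum>\<^sub>\<infinity>i\<in>fst (l_part d A \<infinity> \<zeta>). epow (d (snd \<zeta> i) (z i)) q)"
    proof (rule Ebound[OF _ _ _ S, of _ "ennreal (c powr q)"])
      show "{i\<in>fst (l_part d A \<infinity> \<zeta>). ennreal c \<le> setdist_pt d (snd \<zeta> i) A} \<subseteq> fst (l_part d A \<infinity> \<zeta>)" by blast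
      show "0 < ennreal (c powr q)" using assms q by simp
      fix i assume i: "i \<in> {i\<in>fst (l_part d A \<infinity> \<zeta>). ennreal c \<le> setdist_pt d (snd \<zeta> i) A}"
      then have "ennreal c \<le> d (snd \<zeta> i) (z i)" using sd_le[of "z i" A d "snd \<zeta> i"] zA by (auto intro: order_trans)
      then show "ennreal (c powr q) \<le> epow (d (snd \<zeta> i) (z i)) q" using epow_ge assms q by simp
    qed
    then show ?thesis by blast
  qed
  have "{i\<in>fst \<zeta>. ennreal c \<le> setdist_pt d (snd \<zeta> i) A} \<subseteq>
     fst (u_part d A \<infinity> \<zeta>) \<union> {i\<in>fst (l_part d A \<infinity> \<zeta>). ennreal c \<le> setdist_pt d (snd \<zeta> i) A}"
    using dbar unfolding fst_upart fst_lpart by auto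
  then show ?thesis using fu fl by (meson finite_UnI finite_subset)
qed

lemma zero_Dp: "zero_diag \<in> Dp d A p"
proof -
  have "Wp d A p (l_part d A \<infinity> zero_diag) zero_diag \<le> 0" if "p \<noteq> \<infinity>"
  proof -
    have "is_matching A (l_part d A \<infinity> zero_diag) zero_diag {} id (\<lambda>_. undefined) (\<lambda>_. undefined)"
      unfolding is_matching_def zero_diag_def l_part_def restr_def by auto
    then have "Wp d A p (l_part d A \<infinity> zero_diag) zero_diag \<le> match_cost d p (l_part d A \<infinity> zero_diag) zero_diag {} id (\<lambda>_. undefined) (\<lambda>_. undefined)"
      by (rule Wp_le)
    also have "\<dots> = 0" using that unfolding match_cost_def Let_def zero_diag_def l_part_def restr_def epow_def
      by simp
    finally show ?thesis .
  qed
  then show ?thesis unfolding Dp_def Dbar_def zero_diag_def u_part_def restr_def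
    by (auto simp: zero_diag_def)
qed

definition oddset :: "nat \<Rightarrow> nat set" where "oddset N = {m. odd m \<and> m < 2*N}"

definition addc :: "'a diagram \<Rightarrow> 'a \<Rightarrow> nat \<Rightarrow> 'a diagram" where
  "addc \<alpha> x N = ((\<lambda>i. 2*i) ` fst \<alpha> \<union> oddset N, \<lambda>m. if even m then snd \<alpha> (m div 2) else x)"

lemma oddset_eq: "oddset N = (\<lambda>j. 2*j+1) ` {..<N}"
  unfolding oddset_def by (auto elim!: oddE)

lemma card_oddset: "card (oddset N) = N" "finite (oddset N)"
proof -
  have "inj_on (\<lambda>j::nat. 2*j+1) {..<N}" by (auto simp: inj_on_def)
  then show "card (oddset N) = N" unfolding oddset_eq by (simp add: card_image)
  show "finite (oddset N)" unfolding oddset_eq by simp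
qed

lemma oddset_sub:
  assumes "Q x"
  shows "oddset N \<subseteq> {m\<in>fst (addc \<alpha> x N). Q (snd (addc \<alpha> x N) m)}"
  using assms unfolding addc_def oddset_def by auto

lemma addc_diff: "fst (addc \<alpha> x N) - (\<lambda>i. 2*i) ` fst \<alpha> = oddset N"
  unfolding addc_def oddset_def by auto

lemma addc_matching:
  assumes "a \<in> A"
  shows "is_matching A \<alpha> (addc \<alpha> x N) (fst \<alpha>) (\<lambda>i. 2*i) (\<lambda>_. a) (\<lambda>_. a)"
  using assms unfolding is_matching_def addc_def by (auto simp: inj_on_def)

lemma addc_cost_inf:
  assumes "emetric d" "a \<in> A" "p = \<infinity>"
  shows "Wp d A p \<alpha> (addc \<alpha> x N) \<le> d a x"
proof -
  have "Wp d A p \<alpha> (addc \<alpha> x N) \<le> match_cost d p \<alpha> (addc \<alpha> x N) (fst \<alpha>) (\<lambda>i. 2*i) (\<lambda>_. a) (\<lambda>_. a)"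
    by (rule Wp_le[OF addc_matching[OF assms(2)]])
  also have "\<dots> \<le> d a x"
  proof -
    have "d (snd \<alpha> k) (snd (addc \<alpha> x N) (2*k)) = 0" for k
      using assms(1) unfolding emetric_def addc_def by simp
    moreover have "snd (addc \<alpha> x N) j = x" if "j \<in> oddset N" for j
      using that unfolding addc_def oddset_def by simp
    ultimately show ?thesis using assms(3) unfolding match_cost_def Let_def addc_diff
      by (auto intro!: SUP_least)
  qed
  finally show ?thesis .
qed

lemma addc_cost_fin:
  assumes "emetric d" "a \<in> A" "p \<noteq> \<infinity>" "enn2real p > 0"
  shows "Wp d A p \<alpha> (addc \<alpha> x N) \<le> epow (of_nat N * epow (d a x) (enn2real p)) (1 / enn2real p)"
proof -
  have "Wp d A p \<alpha> (addc \<alpha> x N) \<le> match_cost d p \<alpha> (addc \<alpha> x N) (fst \<alpha>) (\<lambda>i. 2*i) (\<lambda>_. a) (\<lambda>_. a)"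
    by (rule Wp_le[OF addc_matching[OF assms(2)]])
  also have "\<dots> = epow (of_nat N * epow (d a x) (enn2real p)) (1 / enn2real p)"
  proof -
    have "d (snd \<alpha> k) (snd (addc \<alpha> x N) (2*k)) = 0" for k
      using assms(1) unfolding emetric_def addc_def by simp
    then have 1: "(\<Sum>\<^sub>\<infinity>k\<in>fst \<alpha>. epow (d (snd \<alpha> k) (snd (addc \<alpha> x N) (2*k))) (enn2real p)) = 0"
      using assms(4) by (simp add: epow_def)
    have "(\<Sum>\<^sub>\<infinity>j\<in>oddset N. epow (d a (snd (addc \<alpha> x N) j)) (enn2real p))
        = (\<Sum>\<^sub>\<infinity>j\<in>oddset N. epow (d a x) (enn2real p))"
      by (rule infsum_cong) (auto simp: addc_def oddset_def)
    also have "\<dots> = of_nat N * epow (d a x) (enn2real p)"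
      using card_oddset by simp
    finally show ?thesis using assms(3) 1 unfolding match_cost_def Let_def addc_diff by simp
  qed
  finally show ?thesis .
qed

lemma infsum_Un_le:
  fixes f :: "'b \<Rightarrow> ennreal"
  shows "infsum f (S \<union> T) \<le> infsum f S + infsum f T"
proof -
  have "infsum f (S \<union> T) = infsum f S + infsum f (T - S)"
    using infsum_Un_disjoint[of f S "T - S"] by (simp add: Un_Diff_cancel)
  also have "\<dots> \<le> infsum f S + infsum f T"
    by (intro add_left_mono infsum_mono_neutral) auto
  finally show ?thesis .
qed

lemma addc_Dp:
  assumes mp: "metric_pair d A" and p1: "1 \<le> p" and \<alpha>: "\<alpha> \<in> Dp d A p" and x: "x \<notin> A"
    and a: "a \<in> A" and dxa: "d x a < \<infinity>"
  shows "addc \<alpha> x N \<in> Dp d A p"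
proof -
  have em: "emetric d" using mp unfolding metric_pair_def by simp
  have dbar: "\<alpha> \<in> Dbar A" using \<alpha> unfolding Dp_def by (auto split: if_splits)
  have dbar': "addc \<alpha> x N \<in> Dbar A" using dbar x unfolding Dbar_def addc_def oddset_def by auto
  have ufin: "finite (fst (u_part d A \<delta> (addc \<alpha> x N)))" if "finite (fst (u_part d A \<delta> \<alpha>))" for \<delta>
  proof -
    have "fst (u_part d A \<delta> (addc \<alpha> x N)) \<subseteq> (\<lambda>i. 2*i) ` fst (u_part d A \<delta> \<alpha>) \<union> oddset N"
      unfolding fst_upart addc_def by auto
    then show ?thesis using that card_oddset(2) by (meson finite_UnI finite_imageI finite_subset)
  qed
  show ?thesis
  proof (cases "p = \<infinity>")
    case True
    have "\<forall>\<delta>>0. finite (fst (u_part d A \<delta> \<alpha>))" using \<alpha> True unfolding Dp_def by simp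
    then have "\<forall>\<delta>>0. finite (fst (u_part d A \<delta> (addc \<alpha> x N)))" using ufin by blast
    then show ?thesis using True dbar' unfolding Dp_def by simp
  next
    case False
    define q where "q = enn2real p"
    have q: "q \<ge> 1" using q_ge1 p1 False q_def by simp
    obtain z where zA: "\<forall>i\<in>fst (l_part d A \<infinity> \<alpha>). z i \<in> A"
      and S: "(\<Sum>\<^sub>\<infinity>i\<in>fst (l_part d A \<infinity> \<alpha>). epow (d (snd \<alpha> i) (z i)) q) < \<infinity>"
      using lpart_sum[OF False \<alpha>] q_def by blast
    define \<zeta> where "\<zeta> = addc \<alpha> x N"
    define z' where "z' = (\<lambda>m::nat. if even m then z (m div 2) else a)"
    define L where "L = fst (l_part d A \<infinity> \<alpha>)"
    have sub: "fst (l_part d A \<infinity> \<zeta>) \<subseteq> (\<lambda>i. 2*i) ` L \<union> oddset N"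
      unfolding fst_lpart \<zeta>_def addc_def L_def by auto
    have zA': "z' m \<in> A" if m: "m \<in> fst (l_part d A \<infinity> \<zeta>)" for m
    proof (cases "even m")
      case True
      then have "m div 2 \<in> L" using m sub unfolding oddset_def by auto
      then show ?thesis using zA True unfolding z'_def L_def by simp
    qed (use a z'_def in simp)
    have m: "is_matching A (l_part d A \<infinity> \<zeta>) zero_diag {} id z' (\<lambda>_. undefined)"
      unfolding is_matching_def zero_diag_def using zA' by auto
    define f where "f = (\<lambda>m. epow (d (snd \<zeta> m) (z' m)) q)"
    have "infsum f (fst (l_part d A \<infinity> \<zeta>)) \<le> infsum f ((\<lambda>i. 2*i) ` L \<union> oddset N)"
      using sub by (intro infsum_mono_neutral) auto
    also have "\<dots> \<le> infsum f ((\<lambda>i. 2*i) ` L) + infsum f (oddset N)" by (rule infsum_Un_le)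
    also have "infsum f ((\<lambda>i. 2*i) ` L) = infsum (f \<circ> (\<lambda>i. 2*i)) L"
      by (rule infsum_reindex) (auto simp: inj_on_def)
    also have "\<dots> = (\<Sum>\<^sub>\<infinity>i\<in>L. epow (d (snd \<alpha> i) (z i)) q)"
      unfolding f_def \<zeta>_def addc_def z'_def by (simp add: o_def)
    also have "infsum f (oddset N) = of_nat N * epow (d x a) q"
    proof -
      have "infsum f (oddset N) = (\<Sum>\<^sub>\<infinity>j\<in>oddset N. epow (d x a) q)"
        by (rule infsum_cong) (auto simp: f_def \<zeta>_def addc_def oddset_def z'_def)
      then show ?thesis using card_oddset by simp
    qed
    finally have le: "infsum f (fst (l_part d A \<infinity> \<zeta>)) \<le> (\<Sum>\<^sub>\<infinity>i\<in>L. epow (d (snd \<alpha> i) (z i)) q) + of_nat N * epow (d x a) q" .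
    have e1: "epow (d x a) q < \<infinity>" using dxa unfolding epow_def by auto
    have e2: "of_nat N * epow (d x a) q < \<infinity>"
      unfolding infinity_ennreal_def
      by (rule ennreal_mult_less_top[THEN iffD2], intro disjI2 conjI of_nat_less_top)
        (use e1 in \<open>simp add: infinity_ennreal_def\<close>)
    have "(\<Sum>\<^sub>\<infinity>i\<in>L. epow (d (snd \<alpha> i) (z i)) q) + of_nat N * epow (d x a) q < \<infinity>"
      using S e2 unfolding L_def infinity_ennreal_def by (intro ennreal_add_less_top[THEN iffD2] conjI)
    then have fin: "infsum f (fst (l_part d A \<infinity> \<zeta>)) < \<infinity>"
      using le by (rule le_less_trans[rotated])
    have "Wp d A p (l_part d A \<infinity> \<zeta>) zero_diag \<le> match_cost d p (l_part d A \<infinity> \<zeta>) zero_diag {} id z' (\<lambda>_. undefined)"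
      by (rule Wp_le[OF m])
    also have "\<dots> = epow (infsum f (fst (l_part d A \<infinity> \<zeta>))) (1/q)"
      using False unfolding match_cost_def Let_def zero_diag_def f_def q_def snd_lpart by simp
    also have "\<dots> < \<infinity>" using fin unfolding epow_def by auto
    finally have "Wp d A p (l_part d A \<infinity> \<zeta>) zero_diag < \<infinity>" .
    then show ?thesis using False \<alpha> dbar' ufin unfolding Dp_def \<zeta>_def by auto
  qed
qed

lemma obtain_real_eps:
  assumes "(\<epsilon>::ennreal) > 0"
  obtains e where "e > 0" "ennreal e \<le> \<epsilon>"
proof (cases "\<epsilon> = top")
  case True then show ?thesis using that[of 1] by simp
next
  case False
  then show ?thesis using that[of "enn2real \<epsilon>"] assms
    by (simp add: enn2real_positive_iff less_top)
qed

lemma A_sub_thick: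
  assumes "emetric d" "\<delta> > 0"
  shows "A \<subseteq> thick d A \<delta>"
proof
  fix a assume "a \<in> A"
  then have "setdist_pt d a A \<le> 0" using sd_le[of a A d a] assms(1) unfolding emetric_def by simp
  then show "a \<in> thick d A \<delta>" using assms(2) unfolding thick_def by simp
qed

lemma near_point:
  assumes mp: "metric_pair d A" and ni: "\<not> isolated_set d A" and e: "e > 0"
  obtains x c where "x \<notin> A" "setdist_pt d x A = ennreal c" "c > 0" "c < e"
proof -
  have em: "emetric d" using mp unfolding metric_pair_def by simp
  have "ennreal e > 0" using e by simp
  then have "thick d A (ennreal e) \<noteq> A" using ni unfolding isolated_set_def by blast
  then obtain x where x: "x \<in> thick d A (ennreal e)" "x \<notin> A" using A_sub_thick[OF em, of "ennreal e" A] e by auto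
  have lt: "setdist_pt d x A < ennreal e" using x unfolding thick_def by simp
  have "setdist_pt d x A \<noteq> 0" using x mp unfolding metric_pair_def eclosed_def by auto
  moreover have lt2: "setdist_pt d x A < top" using lt ennreal_less_top order.strict_trans by blast
  ultimately have pos: "enn2real (setdist_pt d x A) > 0"
    by (simp add: enn2real_positive_iff zero_less_iff_neq_zero)
  have eq: "setdist_pt d x A = ennreal (enn2real (setdist_pt d x A))"
    using lt2 by (simp add: ennreal_enn2real_if less_top)
  have "enn2real (setdist_pt d x A) < e" using lt eq e by (metis ennreal_less_iff enn2real_nonneg)
  then show ?thesis using that x(2) eq pos by blast
qed

lemma near_A_point:
  assumes "setdist_pt d x A < r"
  obtains a where "a \<in> A" "d x a < r"
  using assms unfolding setdist_pt_def by (auto simp: INF_less_iff)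

lemma fin_V:
  assumes "1 \<le> p" "\<zeta> \<in> Dp d A p" "0 < b" "b \<le> c/2"
  shows "finite {i\<in>fst \<zeta>. ennreal c < setdist_pt d (snd \<zeta> i) A + ennreal b}"
proof -
  have "{i\<in>fst \<zeta>. ennreal c < setdist_pt d (snd \<zeta> i) A + ennreal b} \<subseteq> {i\<in>fst \<zeta>. ennreal (c/2) \<le> setdist_pt d (snd \<zeta> i) A}"
  proof (safe)
    fix i assume i: "i \<in> fst \<zeta>" "ennreal c < setdist_pt d (snd \<zeta> i) A + ennreal b"
    show "ennreal (c/2) \<le> setdist_pt d (snd \<zeta> i) A"
    proof (rule ccontr)
      assume "\<not> ?thesis"
      then have "setdist_pt d (snd \<zeta> i) A + ennreal b \<le> ennreal (c/2) + ennreal (c/2)"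
        using assms by (intro add_mono) auto
      also have "\<dots> = ennreal c" using assms by (simp add: ennreal_plus[symmetric] del: ennreal_plus)
      finally show False using i by simp
    qed
  qed
  moreover have "c/2 > 0" using assms by simp
  ultimately show ?thesis using L1[OF assms(1,2)] by (meson finite_subset)
qed

lemma main_inf:
  assumes mp: "metric_pair d A" and ni: "\<not> isolated_set d A" and p: "p = \<infinity>"
    and \<alpha>: "\<alpha> \<in> Dp d A p" and \<epsilon>: "\<epsilon> > 0"
    and hK: "\<forall>\<beta>\<in>Dp d A p. Wp d A p \<alpha> \<beta> < \<epsilon> \<longrightarrow> \<beta> \<in> K"
    and cK: "compactin (Wp_topology d A p) K"
  shows False
proof -
  have em: "emetric d" using mp unfolding metric_pair_def by simp
  have p1: "1 \<le> p" using p by simp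
  obtain e where e: "e > 0" "ennreal e \<le> \<epsilon>" using obtain_real_eps[OF \<epsilon>] by blast
  obtain x c where x: "x \<notin> A" "setdist_pt d x A = ennreal c" "c > 0" "c < e"
    using near_point[OF mp ni e(1)] by blast
  have "setdist_pt d x A < ennreal e" using x by (simp add: ennreal_lessI)
  then obtain a where a: "a \<in> A" "d x a < ennreal e" by (rule near_A_point)
  define V where "V t = {\<zeta>\<in>Dp d A p. \<exists>b>0. b \<le> c/2 \<and>
      card {i\<in>fst \<zeta>. ennreal c < setdist_pt d (snd \<zeta> i) A + ennreal b} < t}" for t
  have openV: "openin (Wp_topology d A p) (V t)" for t
    unfolding openin_Wp WpP_def
  proof (intro conjI ballI)
    show "V t \<subseteq> Dp d A p" unfolding V_def by blast
    fix \<zeta> assume "\<zeta> \<in> V t"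
    then obtain b where b: "b > 0" "b \<le> c/2" "\<zeta> \<in> Dp d A p"
      and cb: "card {i\<in>fst \<zeta>. ennreal c < setdist_pt d (snd \<zeta> i) A + ennreal b} < t"
      unfolding V_def by blast
    show "\<exists>\<epsilon>>0. \<forall>\<beta>\<in>Dp d A p. Wp d A p \<zeta> \<beta> < \<epsilon> \<longrightarrow> \<beta> \<in> V t"
    proof (intro exI[of _ "ennreal (b/2)"] conjI ballI impI)
      show "ennreal (b/2) > 0" using b by simp
      fix \<beta> assume \<beta>: "\<beta> \<in> Dp d A p" "Wp d A p \<zeta> \<beta> < ennreal (b/2)"
      then obtain Km \<phi> z w where m: "is_matching A \<zeta> \<beta> Km \<phi> z w"
        and mc: "match_cost d p \<zeta> \<beta> Km \<phi> z w < ennreal (b/2)" using Wp_lessE by blast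
      have sm: "(\<forall>k\<in>Km. d (snd \<zeta> k) (snd \<beta> (\<phi> k)) < ennreal (b/2)) \<and>
         (\<forall>j\<in>fst \<beta> - \<phi>`Km. d (w j) (snd \<beta> j) < ennreal (b/2))"
        using cost_inf[OF p mc] .
      have gc: "{j\<in>fst \<beta>. ennreal c < setdist_pt d (snd \<beta> j) A + ennreal (b/2)} \<subseteq>
         \<phi> ` {k\<in>Km. ennreal c < setdist_pt d (snd \<zeta> k) A + ennreal (b/2+b/2)}
         \<union> \<phi> ` {k\<in>Km. ennreal (b/2) \<le> d (snd \<zeta> k) (snd \<beta> (\<phi> k))}
         \<union> {j\<in>fst \<beta> - \<phi>`Km. ennreal (b/2) \<le> d (w j) (snd \<beta> j)}"
        by (rule GC[OF em m]) (use b in auto)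
      have e1: "{k\<in>Km. ennreal (b/2) \<le> d (snd \<zeta> k) (snd \<beta> (\<phi> k))} = {}"
        and e2: "{j\<in>fst \<beta> - \<phi>`Km. ennreal (b/2) \<le> d (w j) (snd \<beta> j)} = {}"
        using sm by (auto simp: not_le[symmetric])
      have Km: "Km \<subseteq> fst \<zeta>" using m unfolding is_matching_def by blast
      have "{j\<in>fst \<beta>. ennreal c < setdist_pt d (snd \<beta> j) A + ennreal (b/2)} \<subseteq>
         \<phi> ` {k\<in>Km. ennreal c < setdist_pt d (snd \<zeta> k) A + ennreal (b/2+b/2)}"
        using gc unfolding e1 e2 by simp
      also have "\<dots> \<subseteq> \<phi> ` {i\<in>fst \<zeta>. ennreal c < setdist_pt d (snd \<zeta> i) A + ennreal b}"
        using Km by (intro image_mono) auto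
      finally have sub: "{j\<in>fst \<beta>. ennreal c < setdist_pt d (snd \<beta> j) A + ennreal (b/2)} \<subseteq>
         \<phi> ` {i\<in>fst \<zeta>. ennreal c < setdist_pt d (snd \<zeta> i) A + ennreal b}" .
      have fin: "finite {i\<in>fst \<zeta>. ennreal c < setdist_pt d (snd \<zeta> i) A + ennreal b}"
        by (rule fin_V[OF p1 b(3) b(1) b(2)])
      have "card {j\<in>fst \<beta>. ennreal c < setdist_pt d (snd \<beta> j) A + ennreal (b/2)}
          \<le> card (\<phi> ` {i\<in>fst \<zeta>. ennreal c < setdist_pt d (snd \<zeta> i) A + ennreal b})"
        using sub fin by (intro card_mono) auto
      also have "\<dots> \<le> card {i\<in>fst \<zeta>. ennreal c < setdist_pt d (snd \<zeta> i) A + ennreal b}"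
        by (rule card_image_le[OF fin])
      finally show "\<beta> \<in> V t" unfolding V_def using \<beta>(1) b cb
        by (intro CollectI conjI exI[of _ "b/2"]) auto
    qed
  qed
  have monoV: "V m \<subseteq> V n" if "m \<le> n" for m n
    using that unfolding V_def by fastforce
  have coverV: "K \<subseteq> (\<Union>n. V n)"
  proof
    fix \<zeta> assume "\<zeta> \<in> K"
    then have \<zeta>: "\<zeta> \<in> Dp d A p" using cK unfolding compactin_def topspace_Wp by blast
    have "\<zeta> \<in> V (Suc (card {i\<in>fst \<zeta>. ennreal c < setdist_pt d (snd \<zeta> i) A + ennreal (c/2)}))"
      unfolding V_def using \<zeta> x(3) by (intro CollectI conjI exI[of _ "c/2"]) auto
    then show "\<zeta> \<in> (\<Union>n. V n)" by blast
  qed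
  obtain t0 where t0: "K \<subseteq> V t0" using compact_chain[OF cK openV monoV coverV] by blast
  define \<zeta> where "\<zeta> = addc \<alpha> x t0"
  have dxa: "d x a < \<infinity>" using a(2) ennreal_less_top[of e] unfolding infinity_ennreal_def by order
  have \<zeta>D: "\<zeta> \<in> Dp d A p" unfolding \<zeta>_def by (rule addc_Dp[OF mp p1 \<alpha> x(1) a(1) dxa])
  have "Wp d A p \<alpha> \<zeta> \<le> d a x" unfolding \<zeta>_def by (rule addc_cost_inf[OF em a(1) p])
  also have "d a x = d x a" using em unfolding emetric_def by metis
  finally have "Wp d A p \<alpha> \<zeta> < \<epsilon>" using a(2) e(2) by (meson order_le_less_trans order_less_le_trans)
  then have "\<zeta> \<in> V t0" using hK \<zeta>D t0 by blast
  then obtain b where b: "b > 0" "b \<le> c/2"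
    and cb: "card {i\<in>fst \<zeta>. ennreal c < setdist_pt d (snd \<zeta> i) A + ennreal b} < t0"
    unfolding V_def by blast
  have "oddset t0 \<subseteq> {i\<in>fst \<zeta>. ennreal c < setdist_pt d (snd \<zeta> i) A + ennreal b}"
    unfolding \<zeta>_def using x(2) b(1) by (intro oddset_sub) (simp add: ennreal_plus[symmetric] del: ennreal_plus)
  then have "card (oddset t0) \<le> card {i\<in>fst \<zeta>. ennreal c < setdist_pt d (snd \<zeta> i) A + ennreal b}"
    using fin_V[OF p1 \<zeta>D b] by (rule card_mono[rotated])
  then show False using cb card_oddset by simp
qed

definition Pc :: "('a \<Rightarrow> 'a \<Rightarrow> ennreal) \<Rightarrow> 'a set \<Rightarrow> 'a diagram \<Rightarrow> real \<Rightarrow> nat" where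
  "Pc d A \<zeta> u = card {i\<in>fst \<zeta>. ennreal u < setdist_pt d (snd \<zeta> i) A}"

lemma Pc_fin:
  assumes "1 \<le> p" "\<zeta> \<in> Dp d A p" "u > 0"
  shows "finite {i\<in>fst \<zeta>. ennreal u < setdist_pt d (snd \<zeta> i) A}"
  by (rule finite_subset[OF _ L1[OF assms]]) auto

lemma ennreal_cancel_lt:
  assumes "ennreal (a+b) < X + ennreal b" "a \<ge> 0" "b \<ge> 0"
  shows "ennreal a < X"
proof (rule ccontr)
  assume "\<not> ennreal a < X"
  then have "X + ennreal b \<le> ennreal a + ennreal b" by (simp add: add_right_mono not_less)
  then show False using assms by (simp add: ennreal_plus)
qed

lemma openP:
  assumes mp: "metric_pair d A" and p1: "1 \<le> p" and pf: "p \<noteq> \<infinity>"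
    and \<zeta>: "\<zeta> \<in> Dp d A p" and lam: "0 < \<gamma>" "\<gamma> < 1" and \<rho>: "\<rho> > 0"
    and H: "\<forall>s. 0 < s \<and> s \<le> r \<longrightarrow> s powr (enn2real p) * real (Pc d A \<zeta> (\<gamma> * s)) \<le> \<theta> - \<rho>"
  shows "\<exists>\<epsilon>>0. \<forall>\<beta>\<in>Dp d A p. Wp d A p \<zeta> \<beta> < \<epsilon> \<longrightarrow>
     (\<forall>s. 0 < s \<and> s \<le> r \<longrightarrow> s powr (enn2real p) * real (Pc d A \<beta> (((1 + \<gamma>)/2) * s)) \<le> \<theta> - \<rho>/2)"
proof -
  define q where "q = enn2real p"
  have q: "q \<ge> 1" using q_ge1 p1 pf q_def by simp
  have em: "emetric d" using mp unfolding metric_pair_def by simp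
  define \<kappa> where "\<kappa> = (1-\<gamma>)/2"
  have \<kappa>: "\<kappa> > 0" using lam \<kappa>_def by simp
  define e0 where "e0 = (\<rho>/2) powr (1/q) * \<kappa>"
  have e0: "e0 > 0" using \<rho> \<kappa> e0_def by simp
  have e0q: "e0 powr q = (\<rho>/2) * \<kappa> powr q"
    using q \<rho> \<kappa> unfolding e0_def by (simp add: powr_mult powr_powr)
  show ?thesis
  proof (intro exI[of _ "ennreal e0"] conjI ballI impI allI)
    show "ennreal e0 > 0" using e0 by simp
    fix \<beta> s assume \<beta>: "\<beta> \<in> Dp d A p" "Wp d A p \<zeta> \<beta> < ennreal e0" and s: "0 < s \<and> s \<le> r"
    then obtain Km \<phi> z w where m: "is_matching A \<zeta> \<beta> Km \<phi> z w"
      and mc: "match_cost d p \<zeta> \<beta> Km \<phi> z w < ennreal e0" using Wp_lessE by blast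
    define B1 where "B1 = {k\<in>Km. ennreal (\<kappa> * s) \<le> d (snd \<zeta> k) (snd \<beta> (\<phi> k))}"
    define B2 where "B2 = {j\<in>fst \<beta> - \<phi>`Km. ennreal (\<kappa> * s) \<le> d (w j) (snd \<beta> j)}"
    define T where "T = {i\<in>fst \<zeta>. ennreal (\<gamma> * s) < setdist_pt d (snd \<zeta> i) A}"
    have ks: "\<kappa> * s > 0" using \<kappa> s by simp
    have cf: "finite B1 \<and> finite B2 \<and> real (card B1 + card B2) * (\<kappa> * s) powr q \<le> e0 powr q"
      unfolding B1_def B2_def q_def
      by (rule cost_fin[OF pf _ mc e0 ks]) (use q q_def in simp)
    have "real (card B1 + card B2) * (\<kappa> powr q * s powr q) \<le> (\<rho>/2) * \<kappa> powr q"
      using cf e0q \<kappa> s by (simp add: powr_mult)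
    then have bad: "real (card B1 + card B2) * s powr q \<le> \<rho>/2"
      using \<kappa> by (simp add: mult.commute mult.left_commute)
    have "\<kappa> * s \<le> (1 + \<gamma>)/2 * s" unfolding \<kappa>_def using lam s by (intro mult_right_mono) auto
    then have kk: "\<kappa> * s + 0 \<le> (1 + \<gamma>)/2 * s" by simp
    have gc: "{j\<in>fst \<beta>. ennreal ((1 + \<gamma>)/2 * s) < setdist_pt d (snd \<beta> j) A + ennreal 0} \<subseteq>
       \<phi> ` {k\<in>Km. ennreal ((1 + \<gamma>)/2 * s) < setdist_pt d (snd \<zeta> k) A + ennreal (0+\<kappa> * s)} \<union> \<phi> ` B1 \<union> B2"
      unfolding B1_def B2_def
      by (rule GC[OF em m ks _ kk]) simp
    define X where "X = {k\<in>Km. ennreal ((1 + \<gamma>)/2 * s) < setdist_pt d (snd \<zeta> k) A + ennreal (0+\<kappa> * s)}"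
    have XT: "X \<subseteq> T"
    proof
      fix k assume k: "k \<in> X"
      have eq: "(1 + \<gamma>)/2 * s = \<gamma> * s + \<kappa> * s" unfolding \<kappa>_def by (simp add: field_simps)
      have "ennreal (\<gamma> * s + \<kappa> * s) < setdist_pt d (snd \<zeta> k) A + ennreal (\<kappa> * s)"
        using k unfolding X_def eq by simp
      then have "ennreal (\<gamma> * s) < setdist_pt d (snd \<zeta> k) A"
        by (rule ennreal_cancel_lt) (use lam s ks in simp_all)
      then show "k \<in> T" using k m unfolding X_def T_def is_matching_def by auto
    qed
    have "{j\<in>fst \<beta>. ennreal ((1 + \<gamma>)/2 * s) < setdist_pt d (snd \<beta> j) A} \<subseteq> \<phi> ` X \<union> \<phi> ` B1 \<union> B2"
      using gc unfolding X_def by simp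
    also have "\<dots> \<subseteq> \<phi> ` T \<union> \<phi> ` B1 \<union> B2" using XT by blast
    finally have sub: "{j\<in>fst \<beta>. ennreal ((1 + \<gamma>)/2 * s) < setdist_pt d (snd \<beta> j) A} \<subseteq> \<phi> ` T \<union> \<phi> ` B1 \<union> B2" .
    have Tf: "finite T" unfolding T_def using Pc_fin[OF p1 \<zeta>] lam s by simp
    have "Pc d A \<beta> ((1 + \<gamma>)/2 * s) \<le> card (\<phi> ` T \<union> \<phi> ` B1 \<union> B2)"
      unfolding Pc_def using sub Tf cf by (intro card_mono) auto
    also have "\<dots> \<le> card (\<phi> ` T) + card (\<phi> ` B1) + card B2"
      by (meson add_le_mono1 card_Un_le le_trans)
    also have "\<dots> \<le> card T + card B1 + card B2"
      using card_image_le Tf cf by (meson add_le_mono le_refl)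
    finally have PP: "real (Pc d A \<beta> ((1 + \<gamma>)/2 * s)) \<le> real (card T) + real (card B1 + card B2)" by simp
    have h1: "s powr q * real (card T) \<le> \<theta> - \<rho>" using H s unfolding Pc_def T_def q_def by blast
    have "s powr q * real (Pc d A \<beta> ((1 + \<gamma>)/2 * s)) \<le> s powr q * real (card T) + real (card B1 + card B2) * s powr q"
      using mult_left_mono[OF PP, of "s powr q"] by (simp add: algebra_simps)
    also have "\<dots> \<le> (\<theta> - \<rho>) + \<rho>/2"
      by (rule add_mono[OF h1 bad])
    finally show "s powr (enn2real p) * real (Pc d A \<beta> ((1 + \<gamma>)/2 * s)) \<le> \<theta> - \<rho>/2" unfolding q_def by simp
  qed
qed

lemma tail_small:
  fixes f :: "'b \<Rightarrow> ennreal"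
  assumes "infsum f L < \<infinity>" "\<eta> > 0"
  shows "\<exists>F. finite F \<and> F \<subseteq> L \<and> infsum f (L - F) \<le> ennreal \<eta>"
proof (rule ccontr)
  assume "\<not> ?thesis"
  then have H: "ennreal \<eta> < infsum f (L - F)" if "finite F" "F \<subseteq> L" for F
    using that by (meson not_le)
  have "sum f F + ennreal \<eta> \<le> infsum f L" if F: "finite F" "F \<subseteq> L" for F
  proof -
    have "infsum f L = infsum f (F \<union> (L - F))" using F by (simp add: Un_absorb1)
    also have "\<dots> = infsum f F + infsum f (L - F)" by (rule infsum_Un_disjoint) auto
    also have "\<dots> = sum f F + infsum f (L - F)" using F by simp
    finally show ?thesis using H[OF F] by (simp add: add_left_mono less_imp_le)
  qed
  then have "(SUP F\<in>{F. finite F \<and> F \<subseteq> L}. sum f F + ennreal \<eta>) \<le> infsum f L"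
    by (intro SUP_least) auto
  moreover have "(SUP F\<in>{F. finite F \<and> F \<subseteq> L}. sum f F + ennreal \<eta>)
      = (SUP F\<in>{F. finite F \<and> F \<subseteq> L}. sum f F) + ennreal \<eta>"
    by (rule ennreal_SUP_add_left) auto
  moreover have "(SUP F\<in>{F. finite F \<and> F \<subseteq> L}. sum f F) = infsum f L"
    by (rule nonneg_infsum_complete[symmetric]) simp
  ultimately have "infsum f L + ennreal \<eta> \<le> infsum f L + 0" by simp
  then have "infsum f L = top \<or> ennreal \<eta> \<le> 0" by (simp add: ennreal_add_left_cancel_le)
  then have "ennreal \<eta> \<le> 0" using assms(1) by auto
  then show False using assms(2) by simp
qed

lemma tailP:
  assumes mp: "metric_pair d A" and p1: "1 \<le> p" and pf: "p \<noteq> \<infinity>"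
    and \<zeta>: "\<zeta> \<in> Dp d A p" and \<eta>: "\<eta> > 0"
  shows "\<exists>r>0. \<forall>s. 0 < s \<and> s \<le> r \<longrightarrow> s powr (enn2real p) * real (Pc d A \<zeta> ((1/2) * s)) \<le> \<eta>"
proof -
  define q where "q = enn2real p"
  have q: "q \<ge> 1" using q_ge1 p1 pf q_def by simp
  obtain z where zA: "\<forall>i\<in>fst (l_part d A \<infinity> \<zeta>). z i \<in> A"
    and S: "(\<Sum>\<^sub>\<infinity>i\<in>fst (l_part d A \<infinity> \<zeta>). epow (d (snd \<zeta> i) (z i)) q) < \<infinity>"
    using lpart_sum[OF pf \<zeta>] q_def by blast
  define L where "L = fst (l_part d A \<infinity> \<zeta>)"
  define e where "e = (\<lambda>i. epow (d (snd \<zeta> i) (z i)) q)"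
  define \<eta>' where "\<eta>' = \<eta>/2 * (1/2) powr q"
  have \<eta>': "\<eta>' > 0" using \<eta> unfolding \<eta>'_def by simp
  obtain F where F: "finite F" "F \<subseteq> L" "infsum e (L - F) \<le> ennreal \<eta>'"
    using tail_small[of e L \<eta>'] S \<eta>' unfolding e_def L_def by blast
  define U where "U = fst (u_part d A \<infinity> \<zeta>)"
  have Uf: "finite U" using \<zeta> pf unfolding Dp_def U_def by simp
  have dbar: "\<forall>i\<in>fst \<zeta>. snd \<zeta> i \<notin> A" using \<zeta> unfolding Dp_def Dbar_def by (auto split: if_splits)
  define M where "M = card U + card F"
  define r where "r = (\<eta> / (2 * (real M + 1))) powr (1/q)"
  have r: "r > 0" using \<eta> unfolding r_def by simp
  have rq: "r powr q = \<eta> / (2 * (real M + 1))"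
    using q \<eta> unfolding r_def by (simp add: powr_powr)
  show ?thesis
  proof (intro exI[of _ r] conjI allI impI r)
    fix s assume s: "0 < s \<and> s \<le> r"
    define h where "h = (1/2) * s"
    have h: "h > 0" using s h_def by simp
    define G where "G = {i\<in>L - F. ennreal (h powr q) \<le> e i}"
    have Gb: "finite G \<and> of_nat (card G) * ennreal (h powr q) \<le> infsum e (L - F)"
      unfolding G_def by (rule Ebound) (use h F(3) in \<open>auto simp: le_less_trans\<close>)
    then have "ennreal (real (card G) * h powr q) \<le> ennreal \<eta>'"
      using F(3) Gb by (simp add: ennreal_mult' ennreal_of_nat_eq_real_of_nat order_trans)
    then have Gr: "real (card G) * h powr q \<le> \<eta>'" using \<eta>' by (simp add: ennreal_le_iff)
    have hq: "h powr q = (1/2) powr q * s powr q" unfolding h_def using s powr_mult[of "1/2" s q] by simp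
    have Gs: "real (card G) * s powr q \<le> \<eta>/2"
      using Gr unfolding hq \<eta>'_def by (simp add: mult.commute mult.left_commute)
    have sub: "{i\<in>fst \<zeta>. ennreal h < setdist_pt d (snd \<zeta> i) A} \<subseteq> U \<union> F \<union> G"
    proof
      fix i assume i: "i \<in> {i\<in>fst \<zeta>. ennreal h < setdist_pt d (snd \<zeta> i) A}"
      then have i1: "i \<in> fst \<zeta>" and i2: "ennreal h < setdist_pt d (snd \<zeta> i) A" by auto
      show "i \<in> U \<union> F \<union> G"
      proof (cases "setdist_pt d (snd \<zeta> i) A < \<infinity>")
        case False
        then have "i \<in> U" using i1 unfolding U_def fst_upart by blast
        then show ?thesis by blast
      next
        case True
        have "snd \<zeta> i \<notin> A" using i1 dbar by blast
        then have iL: "i \<in> L" using i1 True unfolding L_def fst_lpart by blast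
        show ?thesis
        proof (cases "i \<in> F")
          case True then show ?thesis by blast
        next
          case False
          have "z i \<in> A" using zA iL unfolding L_def by blast
          then have "setdist_pt d (snd \<zeta> i) A \<le> d (snd \<zeta> i) (z i)" by (rule sd_le)
          then have "ennreal h \<le> d (snd \<zeta> i) (z i)" using i2 by (meson less_imp_le order_trans)
          then have "ennreal (h powr q) \<le> e i" unfolding e_def using epow_ge h q by simp
          then have "i \<in> G" using False iL unfolding G_def by blast
          then show ?thesis by blast
        qed
      qed
    qed
    have "Pc d A \<zeta> h \<le> card (U \<union> F \<union> G)"
      unfolding Pc_def using sub Uf F(1) Gb by (intro card_mono) auto
    also have "\<dots> \<le> M + card G" unfolding M_def by (meson add_le_mono1 card_Un_le le_trans)
    finally have PM: "real (Pc d A \<zeta> h) \<le> real M + real (card G)" by simp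
    have "s powr q \<le> r powr q" using s q by (intro powr_mono2) auto
    then have "s powr q * real M \<le> \<eta> / (2 * (real M + 1)) * real M"
      unfolding rq by (intro mult_right_mono) auto
    also have "\<dots> \<le> \<eta>/2"
      using \<eta> by (simp add: field_simps)
    finally have Ms: "s powr q * real M \<le> \<eta>/2" .
    have "s powr q * real (Pc d A \<zeta> h) \<le> s powr q * real M + real (card G) * s powr q"
      using mult_left_mono[OF PM, of "s powr q"] by (simp add: algebra_simps)
    also have "\<dots> \<le> \<eta>/2 + \<eta>/2" by (rule add_mono[OF Ms Gs])
    finally show "s powr (enn2real p) * real (Pc d A \<zeta> ((1/2) * s)) \<le> \<eta>"
      unfolding q_def[symmetric] h_def[symmetric] by simp
  qed
qed

lemma main_fin:
  assumes mp: "metric_pair d A" and ni: "\<not> isolated_set d A" and p1: "1 \<le> p" and pf: "p \<noteq> \<infinity>"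
    and \<alpha>: "\<alpha> \<in> Dp d A p" and \<epsilon>: "\<epsilon> > 0"
    and hK: "\<forall>\<beta>\<in>Dp d A p. Wp d A p \<alpha> \<beta> < \<epsilon> \<longrightarrow> \<beta> \<in> K"
    and cK: "compactin (Wp_topology d A p) K"
  shows False
proof -
  have em: "emetric d" using mp unfolding metric_pair_def by simp
  define q where "q = enn2real p"
  have q: "q \<ge> 1" using q_ge1 p1 pf q_def by simp
  obtain e where e: "e > 0" "ennreal e \<le> \<epsilon>" using obtain_real_eps[OF \<epsilon>] by blast
  define R where "R = (e/2) powr q"
  define L0 where "L0 = R/2"
  define \<theta> where "\<theta> = L0 / 2 powr q"
  have R: "R > 0" using e unfolding R_def by simp
  have \<theta>: "\<theta> > 0" using R unfolding \<theta>_def L0_def by simp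
  define Ob where "Ob n = {\<zeta>\<in>Dp d A p. \<exists>\<gamma> \<rho>. 0 < \<gamma> \<and> \<gamma> < 1 \<and> 0 < \<rho> \<and>
      (\<forall>s. 0 < s \<and> s \<le> 1/(real n + 1) \<longrightarrow> s powr (enn2real p) * real (Pc d A \<zeta> (\<gamma> * s)) \<le> \<theta> - \<rho>)}" for n
  have openO: "openin (Wp_topology d A p) (Ob n)" for n
    unfolding openin_Wp WpP_def
  proof (intro conjI ballI)
    show "Ob n \<subseteq> Dp d A p" unfolding Ob_def by blast
    fix \<zeta> assume "\<zeta> \<in> Ob n"
    then obtain \<gamma> \<rho> where \<zeta>: "\<zeta> \<in> Dp d A p" and g: "0 < \<gamma>" "\<gamma> < 1" "0 < \<rho>"
      and H: "\<forall>s. 0 < s \<and> s \<le> 1/(real n + 1) \<longrightarrow> s powr (enn2real p) * real (Pc d A \<zeta> (\<gamma> * s)) \<le> \<theta> - \<rho>"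
      unfolding Ob_def by blast
    obtain \<epsilon>' where \<epsilon>': "\<epsilon>' > 0" and
      H': "\<forall>\<beta>\<in>Dp d A p. Wp d A p \<zeta> \<beta> < \<epsilon>' \<longrightarrow>
       (\<forall>s. 0 < s \<and> s \<le> 1/(real n + 1) \<longrightarrow> s powr (enn2real p) * real (Pc d A \<beta> (((1 + \<gamma>)/2) * s)) \<le> \<theta> - \<rho>/2)"
      using openP[OF mp p1 pf \<zeta> g H] by blast
    have g': "0 < (1 + \<gamma>)/2" "(1 + \<gamma>)/2 < 1" "0 < \<rho>/2" using g by auto
    show "\<exists>\<epsilon>>0. \<forall>\<beta>\<in>Dp d A p. Wp d A p \<zeta> \<beta> < \<epsilon> \<longrightarrow> \<beta> \<in> Ob n"
    proof (intro exI[of _ \<epsilon>'] conjI ballI impI \<epsilon>')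
      fix \<beta> assume \<beta>: "\<beta> \<in> Dp d A p" "Wp d A p \<zeta> \<beta> < \<epsilon>'"
      have "\<forall>s. 0 < s \<and> s \<le> 1/(real n + 1) \<longrightarrow> s powr (enn2real p) * real (Pc d A \<beta> (((1 + \<gamma>)/2) * s)) \<le> \<theta> - \<rho>/2"
        using H' \<beta> by blast
      then show "\<beta> \<in> Ob n" unfolding Ob_def using \<beta>(1) g' by blast
    qed
  qed
  have monoO: "Ob m \<subseteq> Ob n" if "m \<le> n" for m n
  proof -
    have "1/(real n + 1) \<le> 1/(real m + 1)" using that by (simp add: frac_le)
    show ?thesis
    proof
      fix \<zeta> assume "\<zeta> \<in> Ob m"
      then obtain \<gamma> \<rho> where \<zeta>: "\<zeta> \<in> Dp d A p" and g: "0 < \<gamma>" "\<gamma> < 1" "0 < \<rho>"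
        and H: "\<forall>s. 0 < s \<and> s \<le> 1/(real m + 1) \<longrightarrow> s powr (enn2real p) * real (Pc d A \<zeta> (\<gamma> * s)) \<le> \<theta> - \<rho>"
        unfolding Ob_def by blast
      have "\<forall>s. 0 < s \<and> s \<le> 1/(real n + 1) \<longrightarrow> s powr (enn2real p) * real (Pc d A \<zeta> (\<gamma> * s)) \<le> \<theta> - \<rho>"
        using H \<open>1/(real n + 1) \<le> 1/(real m + 1)\<close> by (meson order_trans)
      then show "\<zeta> \<in> Ob n" unfolding Ob_def using \<zeta> g by blast
    qed
  qed
  have coverO: "K \<subseteq> (\<Union>n. Ob n)"
  proof
    fix \<zeta> assume "\<zeta> \<in> K"
    then have \<zeta>: "\<zeta> \<in> Dp d A p" using cK unfolding compactin_def topspace_Wp by blast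
    obtain r where r: "r > 0" and
      T: "\<forall>s. 0 < s \<and> s \<le> r \<longrightarrow> s powr (enn2real p) * real (Pc d A \<zeta> ((1/2) * s)) \<le> \<theta>/2"
      using tailP[OF mp p1 pf \<zeta>, of "\<theta>/2"] \<theta> by auto
    obtain n where n: "n > 0" "inverse (real n) < r" using ex_inverse_of_nat_less[OF r] by blast
    have "1/(real n + 1) \<le> inverse (real n)" using n by (simp add: field_simps)
    then have "\<forall>s. 0 < s \<and> s \<le> 1/(real n + 1) \<longrightarrow> s powr (enn2real p) * real (Pc d A \<zeta> ((1/2) * s)) \<le> \<theta> - \<theta>/2"
    proof (intro allI impI)
      fix s assume s: "0 < s \<and> s \<le> 1/(real n + 1)"
      then have "s \<le> r" using \<open>1/(real n + 1) \<le> inverse (real n)\<close> n(2) by linarith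
      then have "s powr (enn2real p) * real (Pc d A \<zeta> ((1/2) * s)) \<le> \<theta>/2" using T s by blast
      then show "s powr (enn2real p) * real (Pc d A \<zeta> ((1/2) * s)) \<le> \<theta> - \<theta>/2" by simp
    qed
    then have "\<zeta> \<in> Ob n" unfolding Ob_def using \<zeta> \<theta>
      by (intro CollectI conjI exI[of _ "1/2"] exI[of _ "\<theta>/2"]) auto
    then show "\<zeta> \<in> (\<Union>n. Ob n)" by blast
  qed
  obtain n0 where n0: "K \<subseteq> Ob n0" using compact_chain[OF cK openO monoO coverO] by blast
  define r0 where "r0 = 1/(real n0 + 1)"
  have r0: "r0 > 0" unfolding r0_def by simp
  have RL: "R - L0 > 0" using R unfolding L0_def by simp
  define \<delta>0 where "\<delta>0 = min r0 ((R - L0) powr (1/q))"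
  have \<delta>0: "\<delta>0 > 0" using r0 RL unfolding \<delta>0_def by simp
  obtain x c where x: "x \<notin> A" "setdist_pt d x A = ennreal c" "c > 0" "c < \<delta>0"
    using near_point[OF mp ni \<delta>0] by blast
  have "setdist_pt d x A < ennreal (2*c)" using x by (simp add: ennreal_lessI)
  then obtain a where a: "a \<in> A" "d x a < ennreal (2*c)" by (rule near_A_point)
  have dxa: "d x a < \<infinity>" using a(2) ennreal_less_top[of "2*c"] unfolding infinity_ennreal_def by order
  define D where "D = enn2real (d x a)"
  have D: "d x a = ennreal D" "D \<ge> 0" using dxa unfolding D_def by (auto simp: less_top)
  have D2: "D < 2*c" using a(2) D x(3) by (simp add: ennreal_less_iff)
  have cq: "c powr q > 0" using x(3) by simp
  define N where "N = nat \<lceil>L0 / c powr q\<rceil>"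
  have N1: "real N \<ge> L0 / c powr q" unfolding N_def by linarith
  have "L0 / c powr q \<ge> 0" using R cq unfolding L0_def by simp
  then have Nc: "real N = real_of_int \<lceil>L0 / c powr q\<rceil>" unfolding N_def by simp
  have N2: "real N < L0 / c powr q + 1" unfolding Nc by linarith
  have NL: "real N * c powr q \<ge> L0" using N1 cq by (simp add: field_simps)
  have "c < (R - L0) powr (1/q)" using x(4) unfolding \<delta>0_def by simp
  then have "c powr q < ((R - L0) powr (1/q)) powr q" using x(3) q by (intro powr_less_mono2) auto
  also have "\<dots> = R - L0" using RL q by (simp add: powr_powr)
  finally have cRL: "c powr q < R - L0" .
  have NR: "real N * c powr q < R"
  proof -
    have "real N * c powr q < (L0 / c powr q + 1) * c powr q" using N2 cq by (intro mult_strict_right_mono) auto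
    also have "\<dots> = L0 + c powr q" using cq by (simp add: field_simps)
    finally show ?thesis using cRL by simp
  qed
  have "D powr q \<le> (2*c) powr q" using D D2 q by (intro powr_mono2) auto
  also have "\<dots> = 2 powr q * c powr q" using x(3) by (simp add: powr_mult)
  finally have Dq: "D powr q \<le> 2 powr q * c powr q" .
  have "real N * D powr q \<le> real N * (2 powr q * c powr q)" using Dq by (intro mult_left_mono) auto
  also have "\<dots> = 2 powr q * (real N * c powr q)" by simp
  also have "\<dots> < 2 powr q * R" using NR by simp
  also have "\<dots> = e powr q" unfolding R_def using e by (simp add: powr_mult[symmetric])
  finally have NDe: "real N * D powr q < e powr q" .
  have NDpos: "real N * D powr q \<ge> 0" by simp
  have "(real N * D powr q) powr (1/q) < (e powr q) powr (1/q)"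
    using NDe NDpos q by (intro powr_less_mono2) auto
  also have "\<dots> = e" using e q by (simp add: powr_powr)
  finally have costlt: "(real N * D powr q) powr (1/q) < e" .
  define \<zeta> where "\<zeta> = addc \<alpha> x N"
  have \<zeta>D: "\<zeta> \<in> Dp d A p" unfolding \<zeta>_def by (rule addc_Dp[OF mp p1 \<alpha> x(1) a(1) dxa])
  have "Wp d A p \<alpha> \<zeta> \<le> epow (of_nat N * epow (d a x) (enn2real p)) (1 / enn2real p)"
    unfolding \<zeta>_def by (rule addc_cost_fin[OF em a(1) pf]) (use q q_def in simp)
  also have "d a x = ennreal D" using em D unfolding emetric_def by metis
  also have "epow (of_nat N * epow (ennreal D) (enn2real p)) (1 / enn2real p)
      = ennreal ((real N * D powr q) powr (1/q))"
    using D(2) unfolding q_def[symmetric]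
    by (simp add: epow_ennreal ennreal_of_nat_eq_real_of_nat ennreal_mult'[symmetric])
  also have "\<dots> < ennreal e" using costlt e by (simp add: ennreal_lessI)
  finally have "Wp d A p \<alpha> \<zeta> < \<epsilon>" using e(2) by order
  then have "\<zeta> \<in> Ob n0" using hK \<zeta>D n0 by blast
  then obtain \<gamma> \<rho> where g: "0 < \<gamma>" "\<gamma> < 1" "0 < \<rho>"
      and H: "\<forall>s. 0 < s \<and> s \<le> r0 \<longrightarrow> s powr q * real (Pc d A \<zeta> (\<gamma> * s)) \<le> \<theta> - \<rho>"
    unfolding Ob_def r0_def q_def by blast
  define s where "s = min r0 (c/(2*\<gamma>))"
  have s0: "s > 0" "s \<le> r0" using r0 x(3) g unfolding s_def by auto
  have "\<gamma> * s \<le> \<gamma> * (c/(2*\<gamma>))" unfolding s_def using g by (intro mult_left_mono) auto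
  also have "\<dots> = c/2" using g by simp
  finally have gs: "\<gamma> * s < c" using x(3) by simp
  have gs0: "\<gamma> * s > 0" using g s0 by simp
  have "oddset N \<subseteq> {i\<in>fst \<zeta>. ennreal (\<gamma> * s) < setdist_pt d (snd \<zeta> i) A}"
    unfolding \<zeta>_def using x(2) gs gs0 by (intro oddset_sub) (simp add: ennreal_lessI)
  then have "card (oddset N) \<le> Pc d A \<zeta> (\<gamma> * s)"
    unfolding Pc_def using Pc_fin[OF p1 \<zeta>D gs0] by (rule card_mono[rotated])
  then have NP: "real N \<le> real (Pc d A \<zeta> (\<gamma> * s))" using card_oddset by simp
  have c2: "c/2 \<le> s"
  proof -
    have "c/2 \<le> r0" using x(3,4) unfolding \<delta>0_def by simp
    moreover have "c/2 \<le> c/(2*\<gamma>)" using g x(3) by (simp add: field_simps)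
    ultimately show ?thesis unfolding s_def by simp
  qed
  have "(c/2) powr q \<le> s powr q" using c2 x(3) q by (intro powr_mono2) auto
  moreover have "(c/2) powr q = c powr q / 2 powr q" using x(3) by (simp add: powr_divide)
  ultimately have sq: "c powr q / 2 powr q \<le> s powr q" by simp
  have "\<theta> = L0 / 2 powr q" by (simp add: \<theta>_def)
  also have "\<dots> \<le> (real N * c powr q) / 2 powr q" using NL by (simp add: divide_right_mono)
  also have "\<dots> = real N * (c powr q / 2 powr q)" by simp
  also have "\<dots> \<le> real N * s powr q" using sq by (intro mult_left_mono) auto
  also have "\<dots> \<le> real (Pc d A \<zeta> (\<gamma> * s)) * s powr q" using NP by (intro mult_right_mono) auto
  also have "\<dots> \<le> \<theta> - \<rho>"
  proof -
    have h: "s powr q * real (Pc d A \<zeta> (\<gamma> * s)) \<le> \<theta> - \<rho>" using H s0 by blast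
    show ?thesis by (subst mult.commute) (rule h)
  qed
  finally show False using g by simp
qed

theorem theorem7p11:
  fixes d :: "'a \<Rightarrow> 'a \<Rightarrow> ennreal" and A :: "'a set" and p :: ennreal
  assumes "metric_pair d A"
    and "\<not> isolated_set d A"
    and "1 \<le> p"
  shows "(\<forall>\<alpha>\<in>Dp d A p. \<not> (\<exists>U K. openin (Wp_topology d A p) U \<and> \<alpha> \<in> U \<and> U \<subseteq> K
                                  \<and> compactin (Wp_topology d A p) K))
       \<and> \<not> locally_compact_space (Wp_topology d A p)
       \<and> (\<forall>K. compactin (Wp_topology d A p) K \<longrightarrow> (Wp_topology d A p) interior_of K = {})"
proof -
  have P1: False if \<alpha>: "\<alpha> \<in> Dp d A p" and U: "openin (Wp_topology d A p) U" "\<alpha> \<in> U" "U \<subseteq> K"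
     and cK: "compactin (Wp_topology d A p) K" for \<alpha> U K
  proof -
    obtain \<epsilon> where \<epsilon>: "\<epsilon> > 0" "\<forall>\<beta>\<in>Dp d A p. Wp d A p \<alpha> \<beta> < \<epsilon> \<longrightarrow> \<beta> \<in> U"
      using U unfolding openin_Wp WpP_def by blast
    then have hK: "\<forall>\<beta>\<in>Dp d A p. Wp d A p \<alpha> \<beta> < \<epsilon> \<longrightarrow> \<beta> \<in> K" using U(3) by blast
    show False
    proof (cases "p = \<infinity>")
      case True
      show False by (rule main_inf[OF assms(1,2) True \<alpha> \<epsilon>(1) hK cK])
    next
      case False
      show False by (rule main_fin[OF assms(1,2,3) False \<alpha> \<epsilon>(1) hK cK])
    qed
  qed
  have C1: "\<forall>\<alpha>\<in>Dp d A p. \<not> (\<exists>U K. openin (Wp_topology d A p) U \<and> \<alpha> \<in> U \<and> U \<subseteq> K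
                                  \<and> compactin (Wp_topology d A p) K)"
    using P1 by blast
  have C2: "\<not> locally_compact_space (Wp_topology d A p)"
  proof
    assume "locally_compact_space (Wp_topology d A p)"
    moreover have "zero_diag \<in> topspace (Wp_topology d A p)" unfolding topspace_Wp by (rule zero_Dp)
    ultimately obtain U K where "openin (Wp_topology d A p) U" "compactin (Wp_topology d A p) K"
      "zero_diag \<in> U" "U \<subseteq> K"
      unfolding locally_compact_space_def by blast
    then show False using P1[OF zero_Dp] by blast
  qed
  have C3: "\<forall>K. compactin (Wp_topology d A p) K \<longrightarrow> (Wp_topology d A p) interior_of K = {}"
  proof (intro allI impI)
    fix K assume cK: "compactin (Wp_topology d A p) K"
    show "(Wp_topology d A p) interior_of K = {}"
    proof (rule ccontr)
      assume "(Wp_topology d A p) interior_of K \<noteq> {}"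
      then obtain \<alpha> where \<alpha>: "\<alpha> \<in> (Wp_topology d A p) interior_of K" by blast
      have "\<alpha> \<in> Dp d A p" using \<alpha> interior_of_subset_topspace[of "Wp_topology d A p" K] unfolding topspace_Wp by blast
      then show False
        using P1[OF _ openin_interior_of \<alpha> interior_of_subset cK] by blast
    qed
  qed
  show ?thesis using C1 C2 C3 by blast
qed

end
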